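(* Let $\mathbf t_1,\mathbf t_2$ be hyper-terms that agree on $\mathrm{supp}(\mathbf t_1)\cap\mathrm{supp}(\mathbf t_2)$, and $Q_1,Q_2$ post hyper-assertions such that $\mathrm{idx}(Q_1)\cap\mathrm{supp}(\mathbf t_2)\subseteq\mathrm{supp}(\mathbf t_1)$ and $\mathrm{idx}(Q_2)\cap\mathrm{supp}(\mathbf t_1)\subseteq\mathrm{supp}(\mathbf t_2)$. Then $$\mathrm{wp}\,\mathbf t_1\,\{Q_1\}\wedge\mathrm{wp}\,\mathbf t_2\,\{Q_2\}\ \vdash\ \mathrm{wp}\,(\mathbf t_1+\mathbf t_2)\,\{\lambda\mathbf r.\ Q_1(\mathbf r)\wedge Q_2(\mathbf r)\}.$$
   Context: Setting. $\mathrm{Val}=\mathbb{Z}$; $\mathrm{PVar}$ is a countably infinite set of program variables; a store is a function $s:\mathrm{PVar}\to\mathrm{Val}$; indices are $\mathrm{Idx}=\mathbb{N}$. Terms of a first-order imperative language are generated by $t ::= v \mid x \mid * \mid t\oplus t \mid \mathtt{skip}\mid x:=t \mid t;t \mid \mathtt{if}\ t\ \mathtt{then}\ t\ \mathtt{else}\ t \mid \mathtt{while}\ t\ \mathtt{do}\ t$, with a nondeterministic big-step semantics $t,s\Downarrow v,s'$. A hyper-term $\mathbf t$ is a finitely supported partial function from $\mathrm{Idx}$ to terms; a hyper-store is a total function $\mathbf s:\mathrm{Idx}\to\mathrm{Store}$; a hyper-return-value is a finitely supported partial function $\mathbf v:\mathrm{Idx}\rightharpoonup\mathrm{Val}$.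 For partial maps $\mathbf f,\mathbf g$ agreeing on the intersection of their supports, $\mathbf f+\mathbf g$ is their union. $\mathbf t,\mathbf s\Downarrow\mathbf v,\mathbf s'$ holds iff for every $i\in\mathrm{supp}(\mathbf t)$, $\mathbf t(i),\mathbf s(i)\Downarrow\mathbf v(i),\mathbf s'(i)$, and for every $i\notin\mathrm{supp}(\mathbf t)$, $\mathbf s'(i)=\mathbf s(i)$ and $\mathbf v(i)$ is undefined. A hyper-assertion is a predicate on hyper-stores; a post hyper-assertion is an upward-closed map $Q$ from hyper-return-values to hyper-assertions (if $Q(\mathbf v)(\mathbf s)$ and $\mathbf v'$ agrees with $\mathbf v$ on $\mathrm{supp}(\mathbf v)$ then $Q(\mathbf v')(\mathbf s)$). Entailment $P\vdash R$ means $\forall\mathbf s.\ P(\mathbf s)\Rightarrow R(\mathbf s)$. $\mathrm{wp}\,\mathbf t\,\{Q\}(\mathbf s):\iff\forall\mathbf v,\mathbf s'.\ (\mathbf t,\mathbf s\Downarrow\mathbf v,\mathbf s')\Rightarrow Q(\mathbf v)(\mathbf s')$. Indices of a post hyper-assertion: $\mathrm{idx}(Q)=\mathrm{Idx}\setminus\{i\mid\forall\mathbf v,\mathbf s,s'.\ Q(\mathbf v)(\mathbf s)\Leftrightarrow Q(\mathbf v[i:\bot])(\mathbf s[i:s'])\}$, where $\mathbf v[i:\bot]$ makes $\mathbf v$ undefined at $i$ and $\mathbf s[i:s']$ is function update. *)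

theory Defs
  imports Main
begin

type_synonym val = int
type_synonym pvar = nat
type_synonym store = "pvar \<Rightarrow> val"
type_synonym idx = nat

datatype "term" =
    Val val
  | Var pvar
  | Star
  | BinOp "val \<Rightarrow> val \<Rightarrow> val" "term" "term"
  | Skip
  | Assign pvar "term"
  | Seq "term" "term"
  | If "term" "term" "term"
  | While "term" "term"

(* nondeterministic big-step semantics  t, s \<Down> v, s'.
   Conventions: nonzero = true; skip and while return 0; x := t returns the assigned value;
   t1;t2 returns the value of t2. *)
inductive bigstep :: "term \<Rightarrow> store \<Rightarrow> val \<Rightarrow> store \<Rightarrow> bool" where
  BVal: "bigstep (Val v) s v s"
| BVar: "bigstep (Var x) s (s x) s"
| BStar: "bigstep Star s v s"
| BBin: "bigstep t1 s v1 s1 \<Longrightarrow> bigstep t2 s1 v2 s2 \<Longrightarrow> bigstep (BinOp f t1 t2) s (f v1 v2) s2"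
| BSkip: "bigstep Skip s 0 s"
| BAssign: "bigstep t s v s1 \<Longrightarrow> bigstep (Assign x t) s v (s1(x := v))"
| BSeq: "bigstep t1 s v1 s1 \<Longrightarrow> bigstep t2 s1 v2 s2 \<Longrightarrow> bigstep (Seq t1 t2) s v2 s2"
| BIfT: "bigstep b s c s1 \<Longrightarrow> c \<noteq> 0 \<Longrightarrow> bigstep t1 s1 v s2 \<Longrightarrow> bigstep (If b t1 t2) s v s2"
| BIfF: "bigstep b s 0 s1 \<Longrightarrow> bigstep t2 s1 v s2 \<Longrightarrow> bigstep (If b t1 t2) s v s2"
| BWhileF: "bigstep b s 0 s1 \<Longrightarrow> bigstep (While b t) s 0 s1"
| BWhileT: "bigstep b s c s1 \<Longrightarrow> c \<noteq> 0 \<Longrightarrow> bigstep t s1 v1 s2 \<Longrightarrow>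
             bigstep (While b t) s2 v s3 \<Longrightarrow> bigstep (While b t) s v s3"

type_synonym hterm = "idx \<rightharpoonup> term"      (* finitely supported: finite (dom t) assumed *)
type_synonym hstore = "idx \<Rightarrow> store"
type_synonym hval = "idx \<rightharpoonup> val"        (* finitely supported *)
type_synonym hassn = "hstore \<Rightarrow> bool"
type_synonym post = "hval \<Rightarrow> hassn"

definition hbigstep :: "hterm \<Rightarrow> hstore \<Rightarrow> hval \<Rightarrow> hstore \<Rightarrow> bool" where
  "hbigstep t s v s' \<longleftrightarrow>
     (\<forall>i\<in>dom t. \<exists>vi. v i = Some vi \<and> bigstep (the (t i)) (s i) vi (s' i)) \<and>
     (\<forall>i. i \<notin> dom t \<longrightarrow> s' i = s i \<and> v i = None)"

definition upward_closed :: "post \<Rightarrow> bool" where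
  "upward_closed Q \<longleftrightarrow> (\<forall>v v' s. finite (dom v) \<and> finite (dom v') \<and> Q v s \<and> v \<subseteq>\<^sub>m v' \<longrightarrow> Q v' s)"

definition entails :: "hassn \<Rightarrow> hassn \<Rightarrow> bool" where
  "entails P R \<longleftrightarrow> (\<forall>s. P s \<longrightarrow> R s)"

definition wp :: "hterm \<Rightarrow> post \<Rightarrow> hassn" where
  "wp t Q s \<longleftrightarrow> (\<forall>v s'. hbigstep t s v s' \<longrightarrow> Q v s')"

definition idx :: "post \<Rightarrow> idx set" where
  "idx Q = UNIV - {i. \<forall>v s s'. finite (dom v) \<longrightarrow> (Q v s \<longleftrightarrow> Q (v(i := None)) (s(i := s')))}"

end

theory Submission
  imports Defs
begin

lemma single_inv:
  assumes "i \<notin> idx Q" "finite (dom v)"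
  shows "Q v s \<longleftrightarrow> Q (v(i := a)) (s(i := b))"
proof -
  have H: "\<And>v s x. finite (dom v) \<Longrightarrow> (Q v s \<longleftrightarrow> Q (v(i := None)) (s(i := x)))"
    using assms(1) unfolding idx_def by blast
  have "Q v s \<longleftrightarrow> Q (v(i := None)) (s(i := s i))" using H assms(2) by blast
  moreover have "finite (dom (v(i := a)))" using assms(2) by simp
  hence "Q (v(i := a)) (s(i := b)) \<longleftrightarrow> Q ((v(i := a))(i := None)) ((s(i := b))(i := s i))"
    using H by blast
  ultimately show ?thesis by simp
qed

lemma multi_inv:
  assumes "finite D"
  shows "D \<inter> idx Q = {} \<Longrightarrow> finite (dom v) \<Longrightarrow> finite (dom v') \<Longrightarrow>
    \<forall>i. i \<notin> D \<longrightarrow> v i = v' i \<and> s i = s' i \<Longrightarrow> Q v s \<longleftrightarrow> Q v' s'"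
  using assms
proof (induction D arbitrary: v s rule: finite_induct)
  case empty
  then have "v = v'" "s = s'" by auto
  then show ?case by simp
next
  case (insert i D)
  have "Q v s \<longleftrightarrow> Q (v(i := v' i)) (s(i := s' i))"
    by (rule single_inv) (use insert.prems in auto)
  also have "\<dots> \<longleftrightarrow> Q v' s'"
  proof (rule insert.IH)
    have "dom (v(i := v' i)) \<subseteq> dom v \<union> dom v'" by (auto simp: dom_def)
    then show "finite (dom (v(i := v' i)))" using insert.prems(2,3) finite_subset by blast
    show "\<forall>j. j \<notin> D \<longrightarrow> (v(i := v' i)) j = v' j \<and> (s(i := s' i)) j = s' j"
      using insert.prems(4) by auto
      show "finite (dom v')" using insert.prems(3) .
    show "D \<inter> idx Q = {}" using insert.prems(1) by blast
  qed
  finally show ?case .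
qed

theorem mainTheorem9:
  fixes t1 t2 :: hterm and Q1 Q2 :: post
  assumes "finite (dom t1)" and "finite (dom t2)"
    and "\<forall>i\<in>dom t1 \<inter> dom t2. t1 i = t2 i"
    and "upward_closed Q1" and "upward_closed Q2"
    and "idx Q1 \<inter> dom t2 \<subseteq> dom t1"
    and "idx Q2 \<inter> dom t1 \<subseteq> dom t2"
  shows "entails (\<lambda>s. wp t1 Q1 s \<and> wp t2 Q2 s) (wp (t1 ++ t2) (\<lambda>r s. Q1 r s \<and> Q2 r s))"
proof -
  have gen: "Q v s'"
    if A: "finite (dom ta)" "finite (dom tb)" "\<forall>i\<in>dom ta \<inter> dom tb. ta i = tb i"
       "idx Q \<inter> dom tb \<subseteq> dom ta" "wp ta Q s" "hbigstep (ta ++ tb) s v s'"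
    for ta tb :: hterm and Q :: post and s v s'
  proof -
    have same: "(ta ++ tb) i = ta i" if "i \<in> dom ta" for i
    proof (cases "tb i")
      case None then show ?thesis by (simp add: map_add_def)
    next
      case (Some y)
      have "i \<in> dom ta \<inter> dom tb" using that Some by (simp add: domI)
      then have "ta i = tb i" by (rule bspec[OF A(3)])
      then show ?thesis using Some by (simp add: map_add_def)
    qed
    define v1 where "v1 = v |` dom ta"
    define s1 where "s1 = (\<lambda>i. if i \<in> dom ta then s' i else s i)"
    have hb: "hbigstep (ta ++ tb) s v s'" by fact
    have hb1: "\<forall>i\<in>dom (ta ++ tb). \<exists>vi. v i = Some vi \<and> bigstep (the ((ta ++ tb) i)) (s i) vi (s' i)"
      using hb unfolding hbigstep_def by (rule conjunct1)
    have hb2: "\<forall>i. i \<notin> dom (ta ++ tb) \<longrightarrow> s' i = s i \<and> v i = None"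
      using hb unfolding hbigstep_def by (rule conjunct2)
    have domv: "dom v = dom (ta ++ tb)"
      using hb1 hb2 by (auto simp: dom_def)
    have "hbigstep ta s v1 s1"
      unfolding hbigstep_def
    proof (rule conjI; intro ballI allI impI)
      fix i assume i: "i \<in> dom ta"
      then have "i \<in> dom (ta ++ tb)" by auto
      then obtain vi where "v i = Some vi" "bigstep (the ((ta ++ tb) i)) (s i) vi (s' i)"
        using bspec[OF hb1] by metis
      then show "\<exists>vi. v1 i = Some vi \<and> bigstep (the (ta i)) (s i) vi (s1 i)"
        using i same[OF i] by (auto simp: v1_def s1_def)
    next
      fix i assume "i \<notin> dom ta"
      then show "s1 i = s i \<and> v1 i = None" by (auto simp: v1_def s1_def)
    qed
    with A(5) have q1: "Q v1 s1" unfolding wp_def by blast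
    have fv: "finite (dom v)" using domv A(1,2) by simp
    have fv1: "finite (dom v1)" using A(1) by (simp add: v1_def)
    have "Q v1 s1 \<longleftrightarrow> Q v s'"
    proof (rule multi_inv[of "dom tb - dom ta"])
      show "finite (dom tb - dom ta)" using A(2) by simp
      show "(dom tb - dom ta) \<inter> idx Q = {}" using A(4) by blast
      show "finite (dom v1)" by fact
      show "finite (dom v)" by fact
      show "\<forall>i. i \<notin> dom tb - dom ta \<longrightarrow> v1 i = v i \<and> s1 i = s' i"
      proof (intro allI impI)
        fix i assume "i \<notin> dom tb - dom ta"
        then consider "i \<in> dom ta" | "i \<notin> dom (ta ++ tb)" by auto
        then show "v1 i = v i \<and> s1 i = s' i"
        proof cases
          case 1 then show ?thesis by (simp add: v1_def s1_def)
        next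
          case 2
          then have "s' i = s i \<and> v i = None" by (rule mp[OF spec[OF hb2]])
          with 2 show ?thesis by (auto simp: v1_def s1_def)
        qed
      qed
    qed
    with q1 show ?thesis by simp
  qed
  have comm: "t1 ++ t2 = t2 ++ t1"
  proof
    fix i
    show "(t1 ++ t2) i = (t2 ++ t1) i"
    proof (cases "t1 i")
      case None then show ?thesis by (simp add: map_add_def split: option.split)
    next
      case (Some a)
      show ?thesis
      proof (cases "t2 i")
        case None then show ?thesis using Some by (simp add: map_add_def)
      next
        case (Some b)
        have "i \<in> dom t1 \<inter> dom t2" using Some \<open>t1 i = Some a\<close> by (simp add: domI)
        then have "t1 i = t2 i" by (rule bspec[OF assms(3)])
        then show ?thesis using Some by (simp add: map_add_def)
      qed
    qed
  qed
  show ?thesis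
    unfolding entails_def
  proof (intro allI impI)
    fix s
    assume w: "wp t1 Q1 s \<and> wp t2 Q2 s"
    show "wp (t1 ++ t2) (\<lambda>r s. Q1 r s \<and> Q2 r s) s"
      unfolding wp_def
    proof (intro allI impI conjI)
      fix v s'
      assume h: "hbigstep (t1 ++ t2) s v s'"
      show "Q1 v s'" using w by (intro gen[OF assms(1) assms(2) assms(3) assms(6) _ h]) (rule conjunct1)
      have "hbigstep (t2 ++ t1) s v s'" by (rule subst[OF comm, where P="\<lambda>t. hbigstep t s v s'", OF h])
      note h2 = this
      have ag: "\<forall>i\<in>dom t2 \<inter> dom t1. t2 i = t1 i" using assms(3) by auto
      show "Q2 v s'" by (rule gen[OF assms(2) assms(1) ag assms(7) conjunct2[OF w] h2])
    qed
  qed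
qed

end
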